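(* Let $n\ge1$ with binary expansion $n=\sum_{i=1}^{\ell}2^{m_i}$, $\ell\ge1$, $m_1>\cdots>m_\ell$. Then: (a) $s(T^{gfb}_n)=n-1-(m_1-m_\ell)$; (b) for every $T\in\mathcal{T}_n$ with $\mathcal{C}(T)=c_n$ that is not isomorphic to $T^{gfb}_n$, one has $s(T)<s(T^{gfb}_n)$.
   Context: Bifurcating trees: rooted trees in which every internal node has exactly two children, considered up to isomorphism; $\mathcal{T}_n$ is the set of such trees with $n$ leaves. For a node $w$, $\kappa_T(w)$ is its number of descendant leaves. The Colless index is $\mathcal{C}(T)=\sum_{v}|\kappa_T(v_1)-\kappa_T(v_2)|$, summed over internal nodes $v$ with children $v_1,v_2$; $c_n=\min\{\mathcal{C}(T):T\in\mathcal{T}_n\}$. An internal node is a symmetry vertex if the subtrees rooted at its two children are isomorphic; $s(T)$ is the number of symmetry vertices of $T$. GFB trees: start with a multiset of $n$ single-node trees; while the multiset has more than one tree, remove a tree $u$ with the minimum number of leaves, then remove a tree $v$ with the minimum number of leaves among the remaining trees, and insert the tree consisting of a new root whose two children are the roots of $u$ and $v$; the final tree is the GFB tree $T^{gfb}_n$ (unique up to isomorphism). *)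

theory Defs
  imports Main
begin

text \<open>Bifurcating (full binary) rooted trees, as ordered trees; isomorphism
  of unordered trees is the relation iso_tree below.\<close>
datatype btree = Leaf | Node btree btree

fun iso_tree :: "btree \<Rightarrow> btree \<Rightarrow> bool" where
  "iso_tree Leaf Leaf = True"
| "iso_tree (Node a b) (Node c d) =
     ((iso_tree a c \<and> iso_tree b d) \<or> (iso_tree a d \<and> iso_tree b c))"
| "iso_tree _ _ = False"

fun leaves :: "btree \<Rightarrow> nat" where
  "leaves Leaf = 1"
| "leaves (Node a b) = leaves a + leaves b"

fun colless :: "btree \<Rightarrow> nat" where
  "colless Leaf = 0"
| "colless (Node a b) = colless a + colless b + nat \<bar>int (leaves a) - int (leaves b)\<bar>"

definition min_colless :: "nat \<Rightarrow> nat" where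
  "min_colless n = (LEAST c. \<exists>t. leaves t = n \<and> colless t = c)"

fun sym_vertices :: "btree \<Rightarrow> nat" where
  "sym_vertices Leaf = 0"
| "sym_vertices (Node a b) =
     sym_vertices a + sym_vertices b + (if iso_tree a b then 1 else 0)"

text \<open>GFB algorithm: the multiset is kept as a list sorted by number of leaves;
  the two first entries are two successive minimal trees; the new tree is
  inserted keeping the list sorted.\<close>
function gfb_merge :: "btree list \<Rightarrow> btree" where
  "gfb_merge [] = Leaf"
| "gfb_merge [t] = t"
| "gfb_merge (u # v # rest) = gfb_merge (insort_key leaves (Node u v) rest)"
  by pat_completeness auto
termination
  by (relation "measure length") (auto simp: length_insort)

definition gfb :: "nat \<Rightarrow> btree" where
  "gfb n = gfb_merge (replicate n Leaf)"

end

theory Submission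
  imports Defs
begin


lemma iso_refl[simp]: "iso_tree t t"
  by (induction t) auto

lemma iso_sym: "iso_tree x y \<Longrightarrow> iso_tree y x"
  by (induction x y rule: iso_tree.induct) auto

lemma iso_tr: "iso_tree x y \<Longrightarrow> iso_tree y z \<Longrightarrow> iso_tree x z"
proof (induction x arbitrary: y z)
  case Leaf
  then show ?case by (cases y; cases z) auto
next
  case (Node a b)
  then show ?case by (cases y; cases z) (auto; blast)+
qed

lemma iso_leaves: "iso_tree x y \<Longrightarrow> leaves x = leaves y"
  by (induction x y rule: iso_tree.induct) auto

lemma iso_swap: "iso_tree (Node a b) (Node b a)"
  by simp

lemma iso_cong: "iso_tree a a' \<Longrightarrow> iso_tree b b' \<Longrightarrow> iso_tree (Node a b) (Node a' b')"
  by simp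

lemma iso_sym_vertices: "iso_tree x y \<Longrightarrow> sym_vertices x = sym_vertices y"
proof (induction x y rule: iso_tree.induct)
  case (2 a b c d)
  then show ?case
    by (auto dest: iso_sym iso_tr) (meson iso_sym iso_tr)+
qed auto

lemma leaves_pos: "leaves t \<ge> 1"
  by (induction t) auto




function cc :: "nat \<Rightarrow> nat" where
  "cc n = (if n \<le> 1 then 0 else if even n then 2 * cc (n div 2)
           else cc (n div 2) + cc (n div 2 + 1) + 1)"
  by auto
termination by (relation "measure id") (auto elim!: oddE)

declare cc.simps[simp del]

lemma cc0[simp]: "cc 0 = 0" by (simp add: cc.simps)
lemma cc1[simp]: "cc 1 = 0" by (simp add: cc.simps)
lemma cc_even: "cc (2*x) = 2 * cc x"
  by (cases "x = 0") (auto simp: cc.simps[of "2*x"])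
lemma cc_odd: "x \<ge> 1 \<Longrightarrow> cc (2*x+1) = cc x + cc (x+1) + 1"
  by (subst cc.simps) simp

definition rng :: "nat \<Rightarrow> nat \<Rightarrow> bool" where
  "rng n a = (\<forall>k. 2^k \<le> n \<longrightarrow> n < 2^Suc k \<longrightarrow> 2^k \<le> 2*a \<and> a \<le> 2^k)"

definition opt :: "nat \<Rightarrow> nat \<Rightarrow> bool" where
  "opt a b = (int (cc (a+b)) = int (cc a) + int (cc b) + \<bar>int a - int b\<bar>)"

definition IQ :: "nat \<Rightarrow> nat \<Rightarrow> bool" where
  "IQ a b = (int (cc (a+b)) \<le> int (cc a) + int (cc b) + \<bar>int a - int b\<bar> \<and>
     (opt a b \<and> 1 \<le> a \<and> 1 \<le> b \<longrightarrow> rng (a+b) a \<and> rng (a+b) b))"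

lemma IQ_sym: "IQ a b \<Longrightarrow> IQ b a"
  unfolding IQ_def opt_def by (simp add: add.commute abs_minus_commute)

lemma pow_split: "k \<ge> 1 \<Longrightarrow> (2::nat)^k = 2 * 2^(k-1)"
  by (cases k) auto

lemma case_ee:
  assumes "IQ x y" "x \<ge> 1" "y \<ge> 1"
  shows "IQ (2*x) (2*y)"
proof -
  have e: "cc (2*x + 2*y) = 2 * cc (x+y)" using cc_even[of "x+y"] by (simp add: algebra_simps)
  have i: "int (cc (x+y)) \<le> int (cc x) + int (cc y) + \<bar>int x - int y\<bar>" using assms(1) unfolding IQ_def by auto
  have ab: "\<bar>int (2*x) - int (2*y)\<bar> = 2 * \<bar>int x - int y\<bar>" by (simp add: abs_if)
  have ineq: "int (cc (2*x+2*y)) \<le> int (cc (2*x)) + int (cc (2*y)) + \<bar>int (2*x) - int (2*y)\<bar>"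
    using i e ab by (simp add: cc_even)
  moreover have "rng (2*x+2*y) (2*x) \<and> rng (2*x+2*y) (2*y)" if o: "opt (2*x) (2*y)"
  proof -
    have "opt x y" using o e ab unfolding opt_def by (simp add: cc_even)
    hence r: "rng (x+y) x" "rng (x+y) y" using assms unfolding IQ_def by auto
    have "2^k \<le> 2*a \<and> a \<le> 2^k" if "2^k \<le> 2*x+2*y" "2*x+2*y < 2^Suc k" "a = 2*x \<or> a = 2*y" for k a
    proof -
      have k1: "k \<ge> 1" using that assms(2,3) by (cases k) auto
      obtain P where P: "P = (2::nat)^(k-1)" by blast
      have k2: "(2::nat)^k = 2*P" "(2::nat)^Suc k = 4*P" using P k1 pow_split[of k] by auto
      have "2^(k-1) \<le> x+y" "x+y < 2^Suc(k-1)" using that k2 P k1 by auto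
      hence "2^(k-1) \<le> 2*x \<and> x \<le> 2^(k-1)" "2^(k-1) \<le> 2*y \<and> y \<le> 2^(k-1)"
        using r unfolding rng_def by blast+
      then show ?thesis using that k2 P by auto
    qed
    then show ?thesis unfolding rng_def by blast
  qed
  ultimately show ?thesis unfolding IQ_def by blast
qed




lemma cc_S0[simp]: "cc (Suc 0) = 0" by (simp add: cc.simps)

lemma case_oo:
  assumes "IQ (x+1) y" "IQ x (y+1)" "x \<ge> 1" "y \<ge> 1"
  shows "IQ (2*x+1) (2*y+1)"
proof -
  have e: "cc ((2*x+1) + (2*y+1)) = 2 * cc (x+y+1)" using cc_even[of "x+y+1"] by (simp add: algebra_simps)
  have i1: "int (cc (x+y+1)) \<le> int (cc (x+1)) + int (cc y) + \<bar>int x + 1 - int y\<bar>"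
    using assms(1) unfolding IQ_def by (simp add: algebra_simps)
  have i2: "int (cc (x+y+1)) \<le> int (cc x) + int (cc (y+1)) + \<bar>int x - int y - 1\<bar>"
    using assms(2) unfolding IQ_def by (simp add: algebra_simps)
  have ca: "cc (2*x+1) = cc x + cc (x+1) + 1" "cc (2*y+1) = cc y + cc (y+1) + 1"
    using cc_odd assms by auto
  have ab: "\<bar>int (2*x+1) - int (2*y+1)\<bar> = 2 * \<bar>int x - int y\<bar>" by (simp add: abs_if)
  have ineq: "int (cc ((2*x+1)+(2*y+1))) \<le> int (cc (2*x+1)) + int (cc (2*y+1)) + \<bar>int (2*x+1) - int (2*y+1)\<bar>"
    using i1 i2 e ca ab by (simp add: abs_if split: if_splits)
  moreover have "rng ((2*x+1)+(2*y+1)) (2*x+1) \<and> rng ((2*x+1)+(2*y+1)) (2*y+1)" if o: "opt (2*x+1) (2*y+1)"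
  proof -
    have "x = y" using o i1 i2 e ca ab unfolding opt_def by (simp add: abs_if split: if_splits)
    then have "2^k \<le> 2*(2*x+1) \<and> 2*x+1 \<le> 2^k" if "2^k \<le> (2*x+1)+(2*y+1)" "(2*x+1)+(2*y+1) < 2^Suc k" for k
      using that by auto
    then show ?thesis unfolding rng_def using \<open>x = y\<close> by auto
  qed
  ultimately show ?thesis unfolding IQ_def by blast
qed

lemma case_o1:
  assumes "IQ x 1" "x \<ge> 1"
  shows "IQ (2*x+1) 1"
proof -
  have e: "cc ((2*x+1) + 1) = 2 * cc (x+1)" using cc_even[of "x+1"] by (simp add: algebra_simps)
  have i1: "int (cc (x+1)) \<le> int (cc x) + \<bar>int x - 1\<bar>"
    using assms(1) unfolding IQ_def by (simp add: algebra_simps)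
  have ca: "cc (2*x+1) = cc x + cc (x+1) + 1" using cc_odd assms by auto
  have "int (cc ((2*x+1)+1)) < int (cc (2*x+1)) + int (cc 1) + \<bar>int (2*x+1) - int 1\<bar>"
    using i1 e ca assms by (simp add: abs_if split: if_splits)
  then show ?thesis unfolding IQ_def opt_def by auto
qed

lemma case_11: "IQ 1 1"
proof -
  have c2: "cc (1+1) = 0" "cc 2 = 0" "cc (Suc (Suc 0)) = 0" using cc_even[of 1] by (simp_all add: numeral_2_eq_2)
  have "2^k \<le> 2*(1::nat) \<and> 1 \<le> (2::nat)^k" if "2^k \<le> (1::nat)+1" "1+1 < (2::nat)^Suc k" for k
  proof -
    have "k \<noteq> 0" using that by (cases k) auto
    then show ?thesis using that by (cases k) auto
  qed
  then show ?thesis unfolding IQ_def opt_def rng_def using c2 by simp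
qed

lemma case_m:
  assumes "IQ x y" "IQ x (y+1)" "x \<ge> 1" "y \<ge> 1"
  shows "IQ (2*x) (2*y+1)"
proof -
  have e: "cc ((2*x) + (2*y+1)) = cc (x+y) + cc (x+y+1) + 1" using cc_odd[of "x+y"] assms by (simp add: algebra_simps)
  have i1: "int (cc (x+y)) \<le> int (cc x) + int (cc y) + \<bar>int x - int y\<bar>"
    using assms(1) unfolding IQ_def by (simp add: algebra_simps)
  have i2: "int (cc (x+y+1)) \<le> int (cc x) + int (cc (y+1)) + \<bar>int x - int y - 1\<bar>"
    using assms(2) unfolding IQ_def by (simp add: algebra_simps)
  have ca: "cc (2*x) = 2 * cc x" "cc (2*y+1) = cc y + cc (y+1) + 1"
    using cc_odd cc_even assms by auto
  have ab: "\<bar>int (2*x) - int (2*y+1)\<bar> = \<bar>int x - int y\<bar> + \<bar>int x - int y - 1\<bar>" by (simp add: abs_if)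
  have ineq: "int (cc ((2*x)+(2*y+1))) \<le> int (cc (2*x)) + int (cc (2*y+1)) + \<bar>int (2*x) - int (2*y+1)\<bar>"
    using i1 i2 e ca ab by linarith
  moreover have "rng ((2*x)+(2*y+1)) (2*x) \<and> rng ((2*x)+(2*y+1)) (2*y+1)" if o: "opt (2*x) (2*y+1)"
  proof -
    have "opt x y" "opt x (y+1)" using o i1 i2 e ca ab unfolding opt_def by (simp_all add: algebra_simps)
    hence r: "rng (x+y) x" "rng (x+y) y" "rng (x+y+1) x" "rng (x+y+1) (y+1)"
      using assms unfolding IQ_def by (auto simp: algebra_simps)
    have "2^k \<le> 2*a \<and> a \<le> 2^k" if "2^k \<le> 2*x+(2*y+1)" "2*x+(2*y+1) < 2^Suc k" "a = 2*x \<or> a = 2*y+1" for k a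
    proof -
      have k1: "k \<ge> 1" using that assms(3,4) by (cases k) auto
      obtain P where P: "P = (2::nat)^(k-1)" by blast
      have k2: "(2::nat)^k = 2*P" "(2::nat)^Suc k = 4*P" using P k1 pow_split[of k] by auto
      have xy: "2^(k-1) \<le> x+y" "x+y < 2^Suc(k-1)" using that k2 P k1 by auto
      hence h1: "P \<le> 2*x \<and> x \<le> P" "P \<le> 2*y \<and> y \<le> P"
        using r P unfolding rng_def by blast+
      have h2: "y + 1 \<le> P" if "x+y+1 < 2*P"
      proof -
        have "2^(k-1) \<le> x+y+1" "x+y+1 < 2^Suc(k-1)" using that k2 P k1 h1 by auto
        then show ?thesis using r P unfolding rng_def by blast
      qed
      have h3: "2*P \<le> 2*x" if "x+y+1 = 2*P"
      proof -
        have "2^k \<le> x+y+1" "x+y+1 < 2^Suc k" using that k2 P k1 h1 by auto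
        then have "2^k \<le> 2*x" using r(3) unfolding rng_def by blast
        then show ?thesis using k2 by simp
      qed
      have "x+y+1 < 2*P \<or> x+y+1 = 2*P" using xy k1 P k2 by auto
      then show ?thesis using h1 h2 h3 that k2 by auto
    qed
    then show ?thesis unfolding rng_def by blast
  qed
  ultimately show ?thesis unfolding IQ_def by blast
qed

lemma case_m1:
  assumes "IQ x 1" "x \<ge> 1"
  shows "IQ (2*x) 1"
proof -
  have e: "cc ((2*x) + 1) = cc x + cc (x+1) + 1" using cc_odd[of "x"] assms by (simp add: algebra_simps)
  have i1: "int (cc (x+1)) \<le> int (cc x) + \<bar>int x - 1\<bar>"
    using assms(1) unfolding IQ_def by (simp add: algebra_simps)
  have ca: "cc (2*x) = 2 * cc x" using cc_even by auto
  have ineq: "int (cc ((2*x)+1)) \<le> int (cc (2*x)) + int (cc 1) + \<bar>int (2*x) - int 1\<bar>"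
    using i1 e ca assms by (simp add: abs_if split: if_splits)
  moreover have "rng ((2*x)+1) (2*x) \<and> rng ((2*x)+1) 1" if o: "opt (2*x) 1"
  proof -
    have "x = 1" using o i1 e ca assms unfolding opt_def by (simp add: abs_if split: if_splits)
    have "2^k \<le> 2*a \<and> a \<le> 2^k" if "2^k \<le> (3::nat)" "3 < (2::nat)^Suc k" "a = 2 \<or> a = 1" for k a :: nat
    proof -
      have "k < 2"
      proof (rule ccontr)
        assume "\<not> k < 2"
        hence "(2::nat)^2 \<le> 2^k" by (intro power_increasing) auto
        then show False using that by simp
      qed
      moreover have "k \<noteq> 0" using that by (cases k) auto
      ultimately have "k = 1" by auto
      then show ?thesis using that by auto
    qed
    note H = this
    have "rng 3 2" "rng 3 1" unfolding rng_def using H[of _ 2] H[of _ 1] by auto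
    then show ?thesis using \<open>x = 1\<close> by (simp add: numeral_3_eq_3)
  qed
  ultimately show ?thesis unfolding IQ_def by blast
qed

lemma case_0: "IQ a 0"
  unfolding IQ_def opt_def by auto

lemma IQ_all: "IQ a b"
proof (induction "a+b" arbitrary: a b rule: less_induct)
  case less
  show ?case
  proof (cases "a = 0 \<or> b = 0")
    case True
    then show ?thesis using case_0[of a] case_0[of b] IQ_sym[of b 0] by auto
  next
    case False
    obtain x i where a: "a = 2*x + i" "i < 2" by (intro that[of "a div 2" "a mod 2"]) auto
    obtain y j where b: "b = 2*y + j" "j < 2" by (intro that[of "b div 2" "b mod 2"]) auto
    consider "i = 0" "j = 0" | "i = 1" "j = 1" | "i = 0" "j = 1" | "i = 1" "j = 0" using a b by linarith
    then show ?thesis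
    proof cases
      case 1
      have "IQ x y" using less[of x y] 1 a b False by auto
      then show ?thesis using a b False case_ee 1 by auto
    next
      case 2
      show ?thesis
      proof (cases "x = 0 \<or> y = 0")
        case True
        then consider "x = 0" "y = 0" | "x = 0" "y \<noteq> 0" | "x \<noteq> 0" "y = 0" by auto
        then show ?thesis
        proof cases
          case 1 then show ?thesis using \<open>i=1\<close> \<open>j=1\<close> a b case_11 by auto
        next
          case 2
          note yy = this
          have "IQ y 1" using less[of y 1] \<open>i=1\<close> \<open>j=1\<close> a b yy by auto
          then have "IQ (2*y+1) 1" using case_o1 yy by auto
          then have "IQ 1 (2*y+1)" by (rule IQ_sym)
          then show ?thesis using yy \<open>i=1\<close> \<open>j=1\<close> a b by auto
        next
          case 3
          have "IQ x 1" using less[of x 1] \<open>i=1\<close> \<open>j=1\<close> a b 3 by auto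
          then have "IQ (2*x+1) 1" using case_o1 3 by auto
          then show ?thesis using 3 \<open>i=1\<close> \<open>j=1\<close> a b by auto
        qed
      next
        case False
        have "IQ (x+1) y" "IQ x (y+1)" using less[of "x+1" y] less[of x "y+1"] \<open>i=1\<close> \<open>j=1\<close> a b False by auto
        then show ?thesis using case_oo False 2 a b by auto
      qed
    next
      case 3
      show ?thesis
      proof (cases "y = 0")
        case True
        have "IQ x 1" using less[of x 1] 3 a b True False by auto
        then show ?thesis using case_m1 3 a b True False by auto
      next
        case F2: False
        have "IQ x y" "IQ x (y+1)" using less[of x y] less[of x "y+1"] 3 a b F2 False by auto
        then show ?thesis using case_m 3 a b F2 False by auto
      qed
    next
      case 4
      show ?thesis
      proof (cases "x = 0")
        case True
        have "IQ y 1" using less[of y 1] 4 a b True False by auto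
        then have "IQ (2*y) 1" using case_m1 4 a b True False by auto
        then have "IQ 1 (2*y)" by (rule IQ_sym)
        then show ?thesis using 4 a b True False by auto
      next
        case F2: False
        have "IQ y x" "IQ y (x+1)" using less[of y x] less[of y "x+1"] 4 a b F2 False by auto
        then have "IQ (2*y) (2*x+1)" using case_m 4 a b F2 False by auto
        then have "IQ (2*x+1) (2*y)" by (rule IQ_sym)
        then show ?thesis using 4 a b by auto
      qed
    qed
  qed
qed




lemma opt_ineq: "int (cc (a+b)) \<le> int (cc a) + int (cc b) + \<bar>int a - int b\<bar>"
  using IQ_all[of a b] unfolding IQ_def by auto

lemma opt_rng: "opt a b \<Longrightarrow> 1 \<le> a \<Longrightarrow> 1 \<le> b \<Longrightarrow> rng (a+b) a \<and> rng (a+b) b"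
  using IQ_all[of a b] unfolding IQ_def by auto

lemma colless_Node_int: "int (colless (Node a b)) = int (colless a) + int (colless b) + \<bar>int (leaves a) - int (leaves b)\<bar>"
  by simp

lemma colless_ge: "cc (leaves t) \<le> colless t"
proof (induction t)
  case Leaf then show ?case by simp
next
  case (Node a b)
  have "int (cc (leaves a + leaves b)) \<le> int (cc (leaves a)) + int (cc (leaves b)) + \<bar>int (leaves a) - int (leaves b)\<bar>"
    by (rule opt_ineq)
  also have "\<dots> \<le> int (colless (Node a b))" using Node by simp
  finally show ?case by simp
qed

lemma exists_min: "n \<ge> 1 \<Longrightarrow> \<exists>t. leaves t = n \<and> colless t = cc n"
proof (induction n rule: less_induct)
  case (less n)
  show ?case
  proof (cases "n = 1")
    case True then show ?thesis by (intro exI[of _ Leaf]) simp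
  next
    case False
    then have n2: "n \<ge> 2" using less.prems by auto
    show ?thesis
    proof (cases "even n")
      case True
      then obtain x where x: "n = 2*x" by auto
      with n2 obtain t where "leaves t = x" "colless t = cc x" using less.IH[of x] by auto
      then show ?thesis using x cc_even[of x] by (intro exI[of _ "Node t t"]) simp
    next
      case False
      then obtain x where x: "n = 2*x+1" using oddE by blast
      with n2 have x1: "x \<ge> 1" by auto
      obtain t where t: "leaves t = x" "colless t = cc x" using less.IH[of x] x x1 by auto
      obtain u where u: "leaves u = x+1" "colless u = cc (x+1)" using less.IH[of "x+1"] x x1 by auto
      show ?thesis using x t u cc_odd[OF x1] by (intro exI[of _ "Node t u"]) simp
    qed
  qed
qed

lemma min_colless_eq: "n \<ge> 1 \<Longrightarrow> min_colless n = cc n"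
  unfolding min_colless_def
proof (rule Least_equality)
  assume "n \<ge> 1" then show "\<exists>t. leaves t = n \<and> colless t = cc n" by (rule exists_min)
next
  fix c assume "\<exists>t. leaves t = n \<and> colless t = c"
  then show "cc n \<le> c" using colless_ge by auto
qed

lemma min_dec:
  assumes "colless (Node a b) = cc (leaves (Node a b))"
  shows "colless a = cc (leaves a) \<and> colless b = cc (leaves b) \<and> opt (leaves a) (leaves b)"
proof -
  have 1: "cc (leaves a) \<le> colless a" "cc (leaves b) \<le> colless b" by (rule colless_ge)+
  have 2: "int (cc (leaves a + leaves b)) \<le> int (cc (leaves a)) + int (cc (leaves b)) + \<bar>int (leaves a) - int (leaves b)\<bar>"
    by (rule opt_ineq)
  have 3: "int (colless (Node a b)) = int (cc (leaves a + leaves b))" using assms by simp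
  show ?thesis using 1 2 3 unfolding opt_def by simp
qed




fun lg :: "nat \<Rightarrow> nat" where
  "lg n = (if n \<le> 1 then 0 else Suc (lg (n div 2)))"

declare lg.simps[simp del]

lemma lg_eq: "2^k \<le> n \<Longrightarrow> n < 2^Suc k \<Longrightarrow> lg n = k"
proof (induction k arbitrary: n)
  case 0 then show ?case by (simp add: lg.simps)
next
  case (Suc k)
  have "2^k \<le> n div 2" "n div 2 < 2^Suc k" using Suc.prems by auto
  then have "lg (n div 2) = k" using Suc.IH by auto
  have "(1::nat) \<le> 2^k" by simp
  moreover have "2 * 2^k \<le> n" using Suc.prems(1) by simp
  ultimately have "\<not> n \<le> 1" by linarith
  then show ?case using \<open>lg (n div 2) = k\<close> by (simp add: lg.simps[of n])
qed

lemma lg_bnd: "n \<ge> 1 \<Longrightarrow> 2^lg n \<le> n \<and> n < 2^Suc (lg n)"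
proof (induction n rule: lg.induct)
  case (1 n)
  show ?case
  proof (cases "n \<le> 1")
    case True then show ?thesis using 1 by (simp add: lg.simps)
  next
    case False
    then have "2^lg (n div 2) \<le> n div 2 \<and> n div 2 < 2^Suc (lg (n div 2))" using 1 by auto
    then show ?thesis using False by (auto simp: lg.simps[of n])
  qed
qed

fun tz :: "nat \<Rightarrow> nat" where
  "tz n = (if n = 0 then 0 else if even n then Suc (tz (n div 2)) else 0)"

declare tz.simps[simp del]

lemma tz_dvd: "2^tz n dvd n"
proof (induction n rule: tz.induct)
  case (1 n)
  then show ?case by (cases "n = 0") (auto simp: tz.simps[of n] elim!: evenE)
qed

lemma tz_ndvd: "n > 0 \<Longrightarrow> \<not> 2^Suc (tz n) dvd n"
proof (induction n rule: tz.induct)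
  case (1 n)
  show ?case
  proof (cases "even n")
    case True
    then obtain m where m: "n = 2*m" by auto
    then have "m > 0" using 1 by auto
    then have "\<not> 2^Suc (tz m) dvd m" using 1 True m by auto
    moreover have "tz n = Suc (tz m)" using m \<open>m > 0\<close> by (simp add: tz.simps[of "2*m"])
    ultimately show ?thesis using m by (simp add: power_Suc)
  next
    case False
    then show ?thesis using 1 by (auto simp: tz.simps[of n] dvd_def)
  qed
qed

lemma tz_ge: "2^s dvd n \<Longrightarrow> n > 0 \<Longrightarrow> s \<le> tz n"
proof (rule ccontr)
  assume a: "2^s dvd n" "n > 0" "\<not> s \<le> tz n"
  then have "(2::nat)^Suc (tz n) dvd 2^s" by (intro le_imp_power_dvd) auto
  then show False using a tz_ndvd[of n] dvd_trans by blast
qed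

lemma tz_eq: "2^t dvd n \<Longrightarrow> \<not> 2^Suc t dvd n \<Longrightarrow> tz n = t"
proof -
  assume a: "2^t dvd n" "\<not> 2^Suc t dvd n"
  then have n0: "n > 0" by (cases n) auto
  have "t \<le> tz n" using tz_ge a n0 by auto
  moreover have "tz n \<le> t"
  proof (rule ccontr)
    assume "\<not> tz n \<le> t"
    then have "(2::nat)^Suc t dvd 2^tz n" by (intro le_imp_power_dvd) auto
    then show False using a tz_dvd[of n] dvd_trans by blast
  qed
  ultimately show ?thesis by auto
qed

lemma tz_pow: "tz (2^k) = k"
  by (rule tz_eq) (auto simp: power_Suc)

lemma lg_pow: "lg (2^k) = k"
  by (rule lg_eq) auto

lemma tz_add_lt:
  assumes "tz a < tz b" "a > 0" "b > 0"
  shows "tz (a+b) = tz a"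
proof (rule tz_eq)
  have "(2::nat)^tz a dvd 2^tz b" using assms by (intro le_imp_power_dvd) auto
  then have "2^tz a dvd b" using tz_dvd dvd_trans by blast
  then show "2^tz a dvd a+b" using tz_dvd by auto
  have "(2::nat)^Suc (tz a) dvd 2^tz b" using assms by (intro le_imp_power_dvd) auto
  then have "2^Suc (tz a) dvd b" using tz_dvd dvd_trans by blast
  then show "\<not> 2^Suc (tz a) dvd a+b" using tz_ndvd[OF assms(2)] by (simp add: dvd_add_left_iff)
qed

lemma tz_add_eq:
  assumes "tz a = tz b" "a > 0" "b > 0"
  shows "tz (a+b) > tz a"
proof -
  define t where "t = tz a"
  obtain a' where a': "a = 2^t * a'" using tz_dvd t_def by (metis dvdE)
  obtain b' where b': "b = 2^t * b'" using tz_dvd assms(1) t_def by (metis dvdE)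
  have na: "\<not> 2^Suc t dvd a" using tz_ndvd[OF assms(2)] t_def by simp
  have nb: "\<not> 2^Suc t dvd b" using tz_ndvd[OF assms(3)] t_def assms(1) by simp
  have "odd a'"
  proof
    assume "even a'"
    then obtain c where "a' = 2*c" by auto
    then have "a = 2^Suc t * c" using a' by simp
    then show False using na by simp
  qed
  moreover have "odd b'"
  proof
    assume "even b'"
    then obtain c where "b' = 2*c" by auto
    then have "b = 2^Suc t * c" using b' by simp
    then show False using nb by simp
  qed
  ultimately have "even (a'+b')" by auto
  then obtain c where c: "a'+b' = 2*c" by (rule evenE)
  have "a + b = 2^t * (a'+b')" using a' b' by (simp add: distrib_left)
  also have "\<dots> = 2^Suc t * c" using c by simp
  finally have "2^Suc t dvd a + b" by simp
  then have "Suc t \<le> tz (a+b)" using tz_ge assms by auto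
  then show ?thesis using t_def by simp
qed


definition dd :: "nat \<Rightarrow> int" where "dd n = int (lg n) - int (tz n)"

lemma lg_range: "P = 2^k \<Longrightarrow> P \<le> x \<Longrightarrow> x < 2*P \<Longrightarrow> lg x = k"
  by (rule lg_eq) auto

lemma tz_range_le: "P = 2^k \<Longrightarrow> P \<le> x \<Longrightarrow> x < 2*P \<Longrightarrow> tz x \<le> k"
proof (rule ccontr)
  assume a: "P = 2^k" "P \<le> x" "x < 2*P" "\<not> tz x \<le> k"
  then have "(2::nat)^Suc k dvd 2^tz x" by (intro le_imp_power_dvd) auto
  then have "2^Suc k dvd x" using tz_dvd dvd_trans by blast
  moreover have "x > 0" using a by auto
  ultimately have "2^Suc k \<le> x" by (rule dvd_imp_le)
  then show False using a by auto
qed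

lemma tz_range_lt: "P = 2^k \<Longrightarrow> P < x \<Longrightarrow> x < 2*P \<Longrightarrow> tz x < k"
proof (rule ccontr)
  assume a: "P = 2^k" "P < x" "x < 2*P" "\<not> tz x < k"
  then have "tz x = k" using tz_range_le[of P k x] by auto
  then obtain m where m: "x = P * m" using tz_dvd a by (metis dvdE)
  have "P > 0" using a by auto
  then have "1 < m" "m < 2" using a m by auto
  then show False by auto
qed

lemma D_main_gt:
  assumes P: "P = 2^k" and r: "P \<le> b" "b < a" "a \<le> 2*P"
  shows "dd (a+b) \<le> dd a + dd b + 1 \<and> (dd (a+b) = dd a + dd b + 1 \<longleftrightarrow> (a = 2*P \<or> b = P))"
proof -
  have P0: "P > 0" using P by auto
  have lgn: "lg (a+b) = Suc k" using P r by (intro lg_eq) auto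
  have lgb: "lg b = k" using P r by (intro lg_range[of P k]) auto
  have tzb: "tz b \<le> k" using P r by (intro tz_range_le[of P k]) auto
  show ?thesis
  proof (cases "a = 2*P")
    case True
    have "lg a = Suc k" "tz a = Suc k" using True P lg_pow[of "Suc k"] tz_pow[of "Suc k"] by auto
    moreover have "tz (a+b) = tz b" using tz_add_lt[of b a] tzb \<open>tz a = Suc k\<close> P0 r by (simp add: add.commute)
    ultimately show ?thesis using lgn lgb True unfolding dd_def by auto
  next
    case False
    have lga: "lg a = k" using P r False by (intro lg_range[of P k]) auto
    have tza: "tz a < k" using P r False by (intro tz_range_lt[of P k]) auto
    show ?thesis
    proof (cases "b = P")
      case True
      have "tz b = k" using True P tz_pow by auto
      then have "tz (a+b) = tz a" using tz_add_lt[of a b] tza P0 r by auto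
      then show ?thesis using lgn lgb lga True \<open>tz b = k\<close> unfolding dd_def by auto
    next
      case bP: False
      have tzb': "tz b < k" using P r bP by (intro tz_range_lt[of P k]) auto
      consider "tz a < tz b" | "tz b < tz a" | "tz a = tz b" by linarith
      then show ?thesis
      proof cases
        case 1
        then have "tz (a+b) = tz a" using tz_add_lt[of a b] P0 r by auto
        then show ?thesis using lgn lgb lga tzb' 1 False bP unfolding dd_def by auto
      next
        case 2
        then have "tz (a+b) = tz b" using tz_add_lt[of b a] P0 r by (auto simp: add.commute)
        then show ?thesis using lgn lgb lga tza 2 False bP unfolding dd_def by auto
      next
        case 3
        then have "tz (a+b) > tz a" using tz_add_eq[of a b] P0 r by auto
        then show ?thesis using lgn lgb lga tza 3 False bP unfolding dd_def by auto
      qed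
    qed
  qed
qed

lemma D_main:
  assumes P: "P = 2^k" and r: "P \<le> a" "a \<le> 2*P" "P \<le> b" "b \<le> 2*P" "a \<noteq> b"
  shows "dd (a+b) \<le> dd a + dd b + 1 \<and> (dd (a+b) = dd a + dd b + 1 \<longleftrightarrow> (a = 2*P \<or> b = 2*P \<or> a = P \<or> b = P))"
proof (cases "b < a")
  case True
  then show ?thesis using D_main_gt[OF P, of b a] r by auto
next
  case False
  then have "a < b" using r by auto
  then show ?thesis using D_main_gt[OF P, of a b] r by (auto simp: add.commute)
qed

lemma dd_double: "x \<ge> 1 \<Longrightarrow> dd (2*x) = dd x"
proof -
  assume x: "x \<ge> 1"
  have b: "2^lg x \<le> x" "x < 2^Suc (lg x)" using lg_bnd[OF x] by auto
  have "lg (2*x) = Suc (lg x)"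
  proof (rule lg_eq)
    show "2^Suc (lg x) \<le> 2*x" using b(1) by simp
    show "2*x < 2^Suc (Suc (lg x))" using b(2) by simp
  qed
  moreover have "tz (2*x) = Suc (tz x)" using x by (simp add: tz.simps[of "2*x"])
  ultimately show ?thesis unfolding dd_def by simp
qed

lemma tz_le_lg: "x \<ge> 1 \<Longrightarrow> tz x \<le> lg x"
proof -
  assume x: "x \<ge> 1"
  have "2^tz x \<le> x" using tz_dvd[of x] x by (intro dvd_imp_le) auto
  also have "x < 2^Suc (lg x)" using lg_bnd[OF x] by blast
  finally have "(2::nat)^tz x < 2^Suc (lg x)" .
  then have "tz x < Suc (lg x)" by (rule power_less_imp_less_exp[rotated]) simp
  then show ?thesis by simp
qed

lemma dd_nonneg: "x \<ge> 1 \<Longrightarrow> dd x \<ge> 0"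
  using tz_le_lg[of x] unfolding dd_def by simp

lemma dd_zero: "x \<ge> 1 \<Longrightarrow> dd x = 0 \<Longrightarrow> x = 2^lg x"
proof -
  assume x: "x \<ge> 1" "dd x = 0"
  then have "tz x = lg x" unfolding dd_def by simp
  then have "2^lg x dvd x" using tz_dvd[of x] by simp
  then obtain m where m: "x = 2^lg x * m" by (rule dvdE)
  have lt: "x < 2^Suc (lg x)" using lg_bnd[OF x(1)] by blast
  have "m \<noteq> 0" using m x(1) by (cases m) auto
  moreover have "\<not> m \<ge> 2"
  proof
    assume "m \<ge> 2"
    then have "2^lg x * 2 \<le> 2^lg x * m" by (rule mult_le_mono2)
    then show False using m lt by simp
  qed
  ultimately have "m = 1" by simp
  then show ?thesis using m by simp
qed

lemma dd_pow: "dd (2^k) = 0"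
  unfolding dd_def by (simp add: lg_pow tz_pow)




fun FT :: "nat \<Rightarrow> btree" where
  "FT 0 = Leaf"
| "FT (Suc k) = Node (FT k) (FT k)"

lemma leaves_FT[simp]: "leaves (FT k) = 2^k"
  by (induction k) auto

lemma sym_FT: "sym_vertices (FT k) = 2^k - 1"
proof (induction k)
  case (Suc k)
  have "(1::nat) \<le> 2^k" by simp
  then obtain e where e: "(2::nat)^k = Suc e" by (cases "(2::nat)^k") auto
  show ?case using Suc.IH e by simp
qed simp

function Phi :: "nat \<Rightarrow> nat \<Rightarrow> btree \<Rightarrow> btree" where
  "Phi j p R = (if p = 0 then R else if odd p then Phi (Suc j) (p div 2) (Node (FT j) R)
               else Phi (Suc j) (p div 2 - 1) (Node R (FT (Suc j))))"
  by auto
termination by (relation "measure (\<lambda>(j,p,R). p)") auto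

declare Phi.simps[simp del]

function Psi :: "nat \<Rightarrow> nat \<Rightarrow> btree" where
  "Psi j p = (if p \<le> 1 then FT j else if even p then Psi (Suc j) (p div 2)
              else Phi (Suc j) (p div 2 - 1) (Node (FT j) (FT (Suc j))))"
  by auto
termination by (relation "measure (\<lambda>(j,p). p)") auto

declare Psi.simps[simp del]

lemma insort_app: "(\<forall>y\<in>set xs. f y < f x) \<Longrightarrow> insort_key f x (xs @ ys) = xs @ insort_key f x ys"
  by (induction xs) auto

lemma insort_end: "(\<forall>y\<in>set xs. f y < f x) \<Longrightarrow> insort_key f x xs = xs @ [x]"
  using insort_app[of xs f x "[]"] by simp

lemma insort_rep: "insort_key f x (replicate q x) = replicate (Suc q) x"
  by (cases q) auto

lemma pairing:
  assumes "\<forall>t\<in>set mid. leaves t < 2^Suc j"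
  shows "gfb_merge (replicate p (FT j) @ mid @ replicate q (FT (Suc j))) =
         gfb_merge (replicate (p mod 2) (FT j) @ mid @ replicate (q + p div 2) (FT (Suc j)))"
proof (induction p arbitrary: q rule: less_induct)
  case (less p)
  show ?case
  proof (cases "p < 2")
    case True
    then show ?thesis by (cases p) auto
  next
    case False
    then obtain p' where p': "p = Suc (Suc p')" by (metis add_2_eq_Suc less_iff_Suc_add not_less_eq)
    have ins: "insort_key leaves (FT (Suc j)) (replicate p' (FT j) @ mid @ replicate q (FT (Suc j)))
        = replicate p' (FT j) @ mid @ replicate (Suc q) (FT (Suc j))"
    proof -
      have "\<forall>y\<in>set (replicate p' (FT j) @ mid). leaves y < leaves (FT (Suc j))" using assms by auto
      then show ?thesis using insort_app[of "replicate p' (FT j) @ mid" leaves "FT (Suc j)" "replicate q (FT (Suc j))"]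
        by (simp add: insort_rep)
    qed
    have "gfb_merge (replicate p (FT j) @ mid @ replicate q (FT (Suc j)))
       = gfb_merge (replicate p' (FT j) @ mid @ replicate (Suc q) (FT (Suc j)))"
      using p' ins by simp
    also have "\<dots> = gfb_merge (replicate (p' mod 2) (FT j) @ mid @ replicate (Suc q + p' div 2) (FT (Suc j)))"
      using less.IH[of p' "Suc q"] p' by simp
    also have "\<dots> = gfb_merge (replicate (p mod 2) (FT j) @ mid @ replicate (q + p div 2) (FT (Suc j)))"
      using p' by simp
    finally show ?thesis .
  qed
qed

lemma level_R:
  "2^j < leaves R \<Longrightarrow> leaves R < 2^Suc j \<Longrightarrow> gfb_merge (replicate p (FT j) @ [R]) = Phi j p R"
proof (induction p arbitrary: j R rule: less_induct)
  case (less p)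
  show ?case
  proof (cases "p = 0")
    case True then show ?thesis by (simp add: Phi.simps)
  next
    case False
    have pr: "gfb_merge (replicate p (FT j) @ [R]) =
      gfb_merge (replicate (p mod 2) (FT j) @ [R] @ replicate (p div 2) (FT (Suc j)))"
      using pairing[of "[R]" j p 0] less.prems by simp
    show ?thesis
    proof (cases "odd p")
      case True
      have "p mod 2 = 1" using True by presburger
      then have "gfb_merge (replicate p (FT j) @ [R]) =
        gfb_merge (FT j # R # replicate (p div 2) (FT (Suc j)))" using pr by simp
      also have "\<dots> = gfb_merge (insort_key leaves (Node (FT j) R) (replicate (p div 2) (FT (Suc j))))"
        by simp
      also have "\<dots> = gfb_merge (replicate (p div 2) (FT (Suc j)) @ [Node (FT j) R])"
        using less.prems by (subst insort_end) auto
      also have "\<dots> = Phi (Suc j) (p div 2) (Node (FT j) R)"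
        using less.IH[of "p div 2" "Suc j" "Node (FT j) R"] less.prems False by auto
      finally show ?thesis using True False by (simp add: Phi.simps[of j p])
    next
      case ev: False
      have "p mod 2 = 0" using ev by presburger
      obtain m where m: "p div 2 = Suc m" using False ev by (metis dvd_mult_div_cancel mult_0_right not0_implies_Suc odd_two_times_div_two_nat)
      have "gfb_merge (replicate p (FT j) @ [R]) =
        gfb_merge (R # FT (Suc j) # replicate m (FT (Suc j)))" using pr m \<open>p mod 2 = 0\<close> by simp
      also have "\<dots> = gfb_merge (insort_key leaves (Node R (FT (Suc j))) (replicate m (FT (Suc j))))"
        by simp
      also have "\<dots> = gfb_merge (replicate m (FT (Suc j)) @ [Node R (FT (Suc j))])"
        using less.prems by (subst insort_end) auto
      also have "\<dots> = Phi (Suc j) m (Node R (FT (Suc j)))"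
        using less.IH[of m "Suc j" "Node R (FT (Suc j))"] less.prems False m by auto
      finally show ?thesis using ev False m by (simp add: Phi.simps[of j p])
    qed
  qed
qed

lemma level_noR:
  "p \<ge> 1 \<Longrightarrow> gfb_merge (replicate p (FT j)) = Psi j p"
proof (induction p arbitrary: j rule: less_induct)
  case (less p)
  show ?case
  proof (cases "p = 1")
    case True then show ?thesis by (simp add: Psi.simps)
  next
    case False
    then have p2: "p \<ge> 2" using less.prems by auto
    have pr: "gfb_merge (replicate p (FT j)) =
      gfb_merge (replicate (p mod 2) (FT j) @ replicate (p div 2) (FT (Suc j)))"
      using pairing[of "[]" j p 0] by simp
    show ?thesis
    proof (cases "even p")
      case True
      have "p mod 2 = 0" using True by presburger
      then have "gfb_merge (replicate p (FT j)) = gfb_merge (replicate (p div 2) (FT (Suc j)))" using pr by simp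
      also have "\<dots> = Psi (Suc j) (p div 2)" using less.IH[of "p div 2" "Suc j"] p2 by auto
      finally show ?thesis using True p2 by (simp add: Psi.simps[of j p])
    next
      case od: False
      have "p mod 2 = 1" using od by presburger
      obtain m where m: "p div 2 = Suc m" using p2 by (metis Suc_1 Suc_le_eq div_greater_zero_iff less_imp_Suc_add zero_less_numeral add_0)
      have "gfb_merge (replicate p (FT j)) = gfb_merge (FT j # FT (Suc j) # replicate m (FT (Suc j)))"
        using pr m \<open>p mod 2 = 1\<close> by simp
      also have "\<dots> = gfb_merge (insort_key leaves (Node (FT j) (FT (Suc j))) (replicate m (FT (Suc j))))"
        by simp
      also have "\<dots> = gfb_merge (replicate m (FT (Suc j)) @ [Node (FT j) (FT (Suc j))])"
        by (subst insort_end) auto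
      also have "\<dots> = Phi (Suc j) m (Node (FT j) (FT (Suc j)))"
        by (rule level_R) auto
      finally show ?thesis using od p2 m by (simp add: Psi.simps[of j p])
    qed
  qed
qed

lemma gfb_Psi: "n \<ge> 1 \<Longrightarrow> gfb n = Psi 0 n"
  unfolding gfb_def using level_noR[of n 0] by simp




fun ex :: "nat \<Rightarrow> nat" where
  "ex M = (if M \<le> 2 then 0 else if M = 3 then 1 else Suc (ex (M div 2)))"

declare ex.simps[simp del]

lemma ex_small: "ex 1 = 0" "ex 2 = 0" "ex 3 = 1" "ex (Suc 0) = 0"
  by (simp_all add: ex.simps)

lemma Phi0: "Phi j 0 R = R"
  by (subst Phi.simps) simp

lemma Phi1: "Phi j (Suc 0) R = Node (FT j) R"
  by (subst Phi.simps) (simp add: Phi0)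

lemma ex_big: "M \<ge> 4 \<Longrightarrow> ex M = Suc (ex (M div 2))"
  by (simp add: ex.simps[of M])

lemma ex_range: "M \<ge> 1 \<Longrightarrow> \<exists>K. 2^K \<le> M \<and> M < 2^Suc K \<and> (ex M = K \<or> Suc (ex M) = K) \<and> 2^ex M \<le> M
   \<and> 2^K \<le> 2*(M - 2^ex M)+1 \<and> 2*(M - 2^ex M)+1 \<le> 2^Suc K"
proof (induction M rule: less_induct)
  case (less M)
  consider "M = 1" | "M = 2" | "M = 3" | "M \<ge> 4" using less.prems by linarith
  then show ?case
  proof cases
    case 1 then show ?thesis by (intro exI[of _ 0]) (simp add: ex_small)
  next
    case 2 then show ?thesis by (intro exI[of _ 1]) (simp add: ex_small)
  next
    case 3 then show ?thesis by (intro exI[of _ 1]) (simp add: ex_small)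
  next
    case 4
    define H where "H = M div 2"
    have H2: "H \<ge> 2" "H < M" using 4 H_def by auto
    obtain K where K: "2^K \<le> H" "H < 2^Suc K" "ex H = K \<or> Suc (ex H) = K" "2^ex H \<le> H"
      "2^K \<le> 2*(H - 2^ex H)+1" "2*(H - 2^ex H)+1 \<le> 2^Suc K"
      using less.IH[of H] H2 by auto
    have K1: "K \<ge> 1"
    proof (rule ccontr)
      assume "\<not> K \<ge> 1" then have "K = 0" by simp
      then show False using K(2) H2 by simp
    qed
    define W where "W = (2::nat)^(K-1)"
    have W: "(2::nat)^K = 2*W" "(2::nat)^Suc K = 4*W" "(2::nat)^Suc (Suc K) = 8*W"
      using K1 W_def by (cases K; simp)+
    define X where "X = (2::nat)^ex H"
    have exM: "ex M = Suc (ex H)" using 4 H_def ex_big by simp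
    have pM: "(2::nat)^ex M = 2*X" using exM X_def by simp
    have Mdec: "M = 2*H + M mod 2" "M mod 2 \<le> 1" using H_def by auto
    show ?thesis
    proof (intro exI[of _ "Suc K"] conjI)
      show "2^Suc K \<le> M" using W K(1) Mdec by linarith
      show "M < 2^Suc (Suc K)" using W K(2) Mdec by linarith
      show "ex M = Suc K \<or> Suc (ex M) = Suc K" using exM K(3) by auto
      show "2^ex M \<le> M" using pM K(4) X_def Mdec by linarith
      define D' where "D' = H - X"
      define r where "r = M mod 2"
      have a1: "M - 2^ex M = 2*D' + r" using pM K(4) X_def Mdec D'_def r_def by linarith
      have a2: "2*W \<le> 2*D'+1" using K(5) W D'_def X_def by simp
      have a3: "2*D'+1 \<le> 4*W" using K(6) W D'_def X_def by simp
      have a4: "r \<le> 1" using r_def by simp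
      have a5: "W \<le> D'" using a2 by linarith
      have a6: "D' < 2*W" using a3 by linarith
      show "2^Suc K \<le> 2*(M - 2^ex M)+1" using a1 a5 W by simp
      show "2*(M - 2^ex M)+1 \<le> 2^Suc (Suc K)" using a1 a6 a4 W by simp
    qed
  qed
qed

lemma ex_lt: "M \<ge> 2 \<Longrightarrow> 2^ex M < M"
proof (induction M rule: less_induct)
  case (less M)
  consider "M = 2" | "M = 3" | "M \<ge> 4" using less.prems by linarith
  then show ?case
  proof cases
    case 3
    have "2^ex (M div 2) < M div 2" using less.IH[of "M div 2"] 3 by auto
    then show ?thesis using ex_big[OF 3] by simp
  qed (simp_all add: ex_small)
qed

lemma Phi_step: "M \<ge> 2 \<Longrightarrow> Phi i (M-1) R =
   Phi (Suc i) (M div 2 - 1) (if even M then Node (FT i) R else Node R (FT (Suc i)))"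
proof -
  assume M: "M \<ge> 2"
  have e: "Phi i (M-1) R = (if M-1 = 0 then R else if odd (M-1) then Phi (Suc i) ((M-1) div 2) (Node (FT i) R)
               else Phi (Suc i) ((M-1) div 2 - 1) (Node R (FT (Suc i))))" by (rule Phi.simps)
  show ?thesis
  proof (cases "even M")
    case True
    then have "odd (M-1)" "(M-1) div 2 = M div 2 - 1" "M - 1 \<noteq> 0" using M by (auto elim!: evenE)
    then show ?thesis using True e by simp
  next
    case False
    then have "even (M-1)" "(M-1) div 2 = M div 2" "M - 1 \<noteq> 0" using M by (auto elim!: oddE)
    then show ?thesis using False e by simp
  qed
qed

lemma TD: "M \<ge> 2 \<Longrightarrow> iso_tree (Phi i (M-1) R) (Node (Phi i (M - 2^ex M - 1) R) (FT (i + ex M)))"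
proof (induction M arbitrary: i R rule: less_induct)
  case (less M)
  consider "M = 2" | "M = 3" | "M \<ge> 4" using less.prems by linarith
  then show ?case
  proof cases
    case 1
    then show ?thesis by (simp add: ex_small Phi0 Phi1)
  next
    case 2
    have "Phi i (M-1) R = Node R (FT (Suc i))" using 2 Phi_step[of 3 i R] by (simp add: Phi0)
    then show ?thesis using 2 by (simp add: ex_small Phi0)
  next
    case 3
    define H where "H = M div 2"
    have H2: "H \<ge> 2" "H < M" using 3 H_def by auto
    define A where "A = (if even M then Node (FT i) R else Node R (FT (Suc i)))"
    have s1: "Phi i (M-1) R = Phi (Suc i) (H - 1) A" using Phi_step[of M i R] less.prems H_def A_def by simp
    have ih: "iso_tree (Phi (Suc i) (H - 1) A) (Node (Phi (Suc i) (H - 2^ex H - 1) A) (FT (Suc i + ex H)))"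
      using less.IH[of H "Suc i" A] H2 by simp
    have exM: "ex M = Suc (ex H)" using 3 H_def ex_big by simp
    have lt: "2^ex H < H" using ex_lt H2 by simp
    define D where "D = M - 2^ex M"
    obtain c where c: "H = 2^ex H + c" using lt by (metis less_imp_add_positive)
    have m2: "M = 2*H + M mod 2" by (simp add: H_def)
    have Dd: "D = 2*(H - 2^ex H) + M mod 2" using D_def exM c m2 by simp
    have D2: "D \<ge> 2" using Dd lt by simp
    have par: "even D = even M" using Dd by presburger
    have Dh: "D div 2 = H - 2^ex H" using Dd by simp
    have "Phi i (D - 1) R = Phi (Suc i) (D div 2 - 1) A"
      using Phi_step[of D i R] D2 par A_def by simp
    then have s2: "Phi i (M - 2^ex M - 1) R = Phi (Suc i) (H - 2^ex H - 1) A" using D_def Dh by simp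
    show ?thesis using s1 s2 ih exM by simp
  qed
qed

lemma Psi_pow: "P \<ge> 1 \<Longrightarrow> Psi j (2^t * P) = Psi (j+t) P"
proof (induction t arbitrary: j)
  case 0 then show ?case by simp
next
  case (Suc t)
  have h: "2^t * P \<ge> 1" using Suc.prems by simp
  have "Psi j (2*(2^t * P)) = Psi (Suc j) (2^t * P)"
  proof -
    have h2: "\<not> 2*(2^t * P) \<le> 1" using h by linarith
    show ?thesis by (subst Psi.simps) (use h2 in simp)
  qed
  also have "\<dots> = Psi (Suc j + t) P" using Suc by simp
  finally show ?case by (simp add: mult.assoc)
qed

lemma Psi1: "Psi k (Suc 0) = FT k"
  by (subst Psi.simps) simp

lemma gfb_pow: "gfb (2^k) = FT k"
  using gfb_Psi[of "2^k"] Psi_pow[of 1 0 k] by (simp add: Psi1)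

lemma sum_insort: "sum_list (map (f::_\<Rightarrow>nat) (insort_key g x xs)) = f x + sum_list (map f xs)"
  by (induction xs) auto

lemma leaves_merge: "xs \<noteq> [] \<Longrightarrow> leaves (gfb_merge xs) = sum_list (map leaves xs)"
proof (induction xs rule: gfb_merge.induct)
  case (3 u v rest)
  then show ?case by (simp add: sum_insort)
qed auto

lemma leaves_gfb: "n \<ge> 1 \<Longrightarrow> leaves (gfb n) = n"
  unfolding gfb_def by (simp add: leaves_merge sum_list_replicate)




lemma gfb_dec:
  assumes n1: "n \<ge> 1" and np: "\<forall>k. n \<noteq> 2^k"
  shows "\<exists>e k'. iso_tree (gfb n) (Node (gfb (n - 2^e)) (FT e)) \<and> 2^Suc k' \<le> n \<and> n < 2^Suc (Suc k')
     \<and> (e = k' \<or> e = Suc k') \<and> 2^k' \<le> n - 2^e \<and> n - 2^e \<le> 2^Suc k' \<and> 2^e < n"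
proof -
  define t where "t = tz n"
  obtain Q where Q: "n = 2^t * Q" using tz_dvd[of n] t_def by (metis dvdE)
  have oQ: "odd Q"
  proof
    assume "even Q"
    then obtain c where "Q = 2*c" by auto
    then have "n = 2^Suc t * c" using Q by simp
    then show False using tz_ndvd[of n] n1 t_def by (metis dvd_triv_left less_le_trans zero_less_one)
  qed
  have Q1: "Q \<noteq> 1" using np Q by auto
  have Q0: "Q \<noteq> 0"
  proof
    assume "Q = 0" then show False using oQ by simp
  qed
  define M where "M = Q div 2"
  have QM: "Q = 2*M+1" using oQ M_def by presburger
  have M1: "M \<ge> 1" using QM Q1 by auto
  define R0 where "R0 = Node (FT t) (FT (Suc t))"
  have g1: "gfb n = Psi t Q" using gfb_Psi[OF n1] Psi_pow[of Q 0 t] Q Q0 by simp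
  have g2: "Psi t Q = Phi (Suc t) (M - 1) R0"
  proof -
    have "\<not> Q \<le> 1" "\<not> even Q" "Q div 2 = M" using Q1 Q0 oQ M_def by auto
    then show ?thesis unfolding R0_def by (subst Psi.simps) simp
  qed
  obtain K where K: "2^K \<le> M" "M < 2^Suc K" "ex M = K \<or> Suc (ex M) = K" "2^ex M \<le> M"
      "2^K \<le> 2*(M - 2^ex M)+1" "2*(M - 2^ex M)+1 \<le> 2^Suc K"
    using ex_range[OF M1] by blast
  define e where "e = Suc t + ex M"
  define D where "D = M - 2^ex M"
  define T where "T = (2::nat)^t"
  have T0: "T > 0" using T_def by simp
  have pe: "(2::nat)^e = T * (2 * 2^ex M)" using e_def T_def by (simp add: power_add)
  have nT: "n = T * (2*M+1)" using Q QM T_def by simp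
  have other: "n - 2^e = T * (2*D+1)"
  proof -
    define X where "X = (2::nat)^ex M"
    obtain c where c: "M = X + c" using K(4) X_def by (metis le_add_diff_inverse)
    have "D = c" using c D_def X_def by simp
    have n': "n = T * (2*c+1) + T*(2*X)" using nT c by (simp add: algebra_simps)
    have pe': "(2::nat)^e = T*(2*X)" using pe X_def by simp
    show ?thesis using n' pe' \<open>D = c\<close> by simp
  qed
  have iso: "iso_tree (gfb n) (Node (gfb (n - 2^e)) (FT e))"
  proof (cases "M = 1")
    case True
    then have "ex M = 0" "D = 0" using ex_small D_def by auto
    then have "n - 2^e = 2^t" "e = Suc t" using other T_def e_def by auto
    moreover have "gfb n = R0" using g1 g2 True by (simp add: Phi0)
    ultimately show ?thesis unfolding R0_def by (simp add: gfb_pow)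
  next
    case False
    then have M2: "M \<ge> 2" using M1 by simp
    have td: "iso_tree (Phi (Suc t) (M-1) R0) (Node (Phi (Suc t) (M - 2^ex M - 1) R0) (FT (Suc t + ex M)))"
      by (rule TD[OF M2])
    have D1: "D \<ge> 1" using ex_lt[OF M2] D_def by simp
    have "Phi (Suc t) (D - 1) R0 = Psi t (2*D+1)"
    proof -
      have f: "\<not> 2*D+1 \<le> 1" "\<not> even (2*D+1)" "(2*D+1) div 2 = D" using D1 by auto
      show ?thesis unfolding R0_def by (subst Psi.simps[of t "2*D+1"]) (use f in simp)
    qed
    also have "\<dots> = gfb (T * (2*D+1))" using gfb_Psi[of "T*(2*D+1)"] Psi_pow[of "2*D+1" 0 t] T_def T0 by simp
    finally have "Phi (Suc t) (D - 1) R0 = gfb (n - 2^e)" using other by simp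
    then show ?thesis using td g1 g2 D_def e_def by simp
  qed
  have pK: "(2::nat)^Suc (t+K) = T * 2^Suc K" "(2::nat)^Suc (Suc (t+K)) = T * (2 * 2^Suc K)" "(2::nat)^(t+K) = T * 2^K"
    using T_def by (simp_all add: power_add)
  show ?thesis
  proof (rule exI[of _ e], rule exI[of _ "t+K"], intro conjI)
    show "iso_tree (gfb n) (Node (gfb (n - 2^e)) (FT e))" by (rule iso)
    have "2^Suc K \<le> 2*M+1" using K(1) by simp
    then have tl: "T * 2^Suc K \<le> T * (2*M+1)" by (rule mult_le_mono2)
    have "(2::nat)^Suc (t+K) = T * 2^Suc K" by (rule pK(1))
    also have "\<dots> \<le> T*(2*M+1)" by (rule tl)
    also have "\<dots> = n" using nT by simp
    finally show "2^Suc (t+K) \<le> n" .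
    have "2*M+1 < 2 * 2^Suc K" using K(2) by simp
    then have tl2: "T*(2*M+1) < T*(2 * 2^Suc K)" using T0 by (rule mult_less_mono2)
    have "n = T*(2*M+1)" by (rule nT)
    also have "\<dots> < T*(2 * 2^Suc K)" by (rule tl2)
    also have "\<dots> = 2^Suc (Suc (t+K))" using pK(2) by simp
    finally show "n < 2^Suc (Suc (t+K))" .
    show "e = t + K \<or> e = Suc (t + K)" using K(3) e_def by auto
    have tl3: "T * 2^K \<le> T * (2*D+1)" using K(5) D_def by (intro mult_le_mono2) simp
    have "(2::nat)^(t+K) = T * 2^K" by (rule pK(3))
    also have "\<dots> \<le> T*(2*D+1)" by (rule tl3)
    also have "\<dots> = n - 2^e" using other by simp
    finally show "2^(t+K) \<le> n - 2^e" .
    have tl4: "T * (2*D+1) \<le> T * 2^Suc K" using K(6) D_def by (intro mult_le_mono2) simp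
    have "n - 2^e = T*(2*D+1)" by (rule other)
    also have "\<dots> \<le> T * 2^Suc K" by (rule tl4)
    also have "\<dots> = 2^Suc (t+K)" using pK(1) by simp
    finally show "n - 2^e \<le> 2^Suc (t+K)" .
    have "2*(2^ex M) < 2*M+1" using K(4) by simp
    then have tl5: "T*(2*(2^ex M)) < T*(2*M+1)" using T0 by (rule mult_less_mono2)
    have "(2::nat)^e = T * (2 * 2^ex M)" by (rule pe)
    also have "\<dots> < T*(2*M+1)" by (rule tl5)
    also have "\<dots> = n" using nT by simp
    finally show "2^e < n" .
  qed
qed

lemma uniq:
  fixes E P n na nb :: nat
  assumes "E = P \<or> E = 2*P" "P \<le> n - E" "n - E \<le> 2*P" "E < n" "na + nb = n"
    "P \<le> na" "na \<le> 2*P" "P \<le> nb" "nb \<le> 2*P" "na = 2*P \<or> nb = 2*P \<or> na = P \<or> nb = P"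
  shows "(na = n - E \<and> nb = E) \<or> (na = E \<and> nb = n - E)"
  using assms by arith

lemma dd1: "dd 1 = 0" "dd (Suc 0) = 0"
  using dd_pow[of 0] by simp_all

lemma gfb1: "gfb 1 = Leaf" "gfb (Suc 0) = Leaf"
  using gfb_pow[of 0] by simp_all

lemma sym_Node: "sym_vertices (Node a b) = sym_vertices a + sym_vertices b + (if iso_tree a b then 1 else 0)"
  by simp

lemma main_bound:
  "colless T = cc (leaves T) \<Longrightarrow> int (sym_vertices T) \<le> int (leaves T) - 1 - dd (leaves T) \<and>
     (int (sym_vertices T) = int (leaves T) - 1 - dd (leaves T) \<longrightarrow> iso_tree T (gfb (leaves T)))"
proof (induction T)
  case Leaf
  then show ?case by (simp add: dd1 gfb1)
next
  case (Node a b)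
  define na where "na = leaves a"
  define nb where "nb = leaves b"
  have md: "colless a = cc na" "colless b = cc nb" "opt na nb" using min_dec[OF Node.prems] na_def nb_def by auto
  have IHa: "int (sym_vertices a) \<le> int na - 1 - dd na"
    "int (sym_vertices a) = int na - 1 - dd na \<longrightarrow> iso_tree a (gfb na)" using Node.IH(1) md na_def by auto
  have IHb: "int (sym_vertices b) \<le> int nb - 1 - dd nb"
    "int (sym_vertices b) = int nb - 1 - dd nb \<longrightarrow> iso_tree b (gfb nb)" using Node.IH(2) md nb_def by auto
  have na1: "na \<ge> 1" "nb \<ge> 1" using leaves_pos na_def nb_def by auto
  have lv: "leaves (Node a b) = na + nb" using na_def nb_def by simp
  show ?case
  proof (cases "na = nb")
    case True
    have ddn: "dd (na + nb) = dd na" using dd_double[OF na1(1)] True by (simp add: mult_2)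
    have dn0: "dd na \<ge> 0" using dd_nonneg na1 by simp
    define I where "I = (if iso_tree a b then 1 else 0::nat)"
    have sN: "int (sym_vertices (Node a b)) = int (sym_vertices a) + int (sym_vertices b) + int I"
      using I_def by simp
    have I1: "int I \<le> 1" using I_def by simp
    have sum: "int (na+nb) = int na + int nb" "int nb = int na" "dd nb = dd na" using True by simp_all
    have bound: "int (sym_vertices (Node a b)) \<le> int (na+nb) - 1 - dd (na+nb)"
      using sN I1 IHa(1) IHb(1) ddn dn0 True sum by linarith
    moreover have "iso_tree (Node a b) (gfb (na+nb))" if eq: "int (sym_vertices (Node a b)) = int (na+nb) - 1 - dd (na+nb)"
    proof -
      have "dd na = 0" "int (sym_vertices a) = int na - 1 - dd na" "int (sym_vertices b) = int nb - 1 - dd nb"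
        using eq sN I1 IHa(1) IHb(1) ddn dn0 True sum by linarith+
      then have ia: "iso_tree a (gfb na)" "iso_tree b (gfb na)" "dd na = 0" using IHa IHb True by auto
      define m where "m = lg na"
      have pw: "na = 2^m" using dd_zero[OF na1(1) ia(3)] m_def by simp
      have "gfb (na+nb) = Node (FT m) (FT m)" using pw True gfb_pow[of "Suc m"] by (simp add: mult_2)
      moreover have "gfb na = FT m" using pw gfb_pow by simp
      ultimately show ?thesis using ia by simp
    qed
    ultimately show ?thesis using lv by auto
  next
    case False
    have nI: "\<not> iso_tree a b" using iso_leaves False na_def nb_def by auto
    have sN: "int (sym_vertices (Node a b)) = int (sym_vertices a) + int (sym_vertices b)"
      using nI by simp
    define n where "n = na + nb"
    have n2: "n \<ge> 2" using na1 n_def by simp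
    have sumn: "int n = int na + int nb" using n_def by simp
    define k where "k = lg n"
    have kb: "2^k \<le> n" "n < 2^Suc k" using lg_bnd[of n] n2 k_def by auto
    have k1: "k \<ge> 1"
    proof (rule ccontr)
      assume "\<not> k \<ge> 1" then have "k = 0" by simp
      then show False using kb n2 by simp
    qed
    obtain k' where k': "k = Suc k'" using k1 by (cases k) auto
    define P where "P = (2::nat)^k'"
    have Pk: "(2::nat)^k = 2*P" "(2::nat)^Suc k = 4*P" using k' P_def by simp_all
    have rg: "rng n na" "rng n nb" using opt_rng[OF md(3) na1] n_def by auto
    have ra: "P \<le> na" "na \<le> 2*P" "P \<le> nb" "nb \<le> 2*P"
      using rg kb Pk unfolding rng_def by (metis mult_le_cancel1 zero_less_numeral)+
    have DM: "dd n \<le> dd na + dd nb + 1 \<and> (dd n = dd na + dd nb + 1 \<longleftrightarrow> (na = 2*P \<or> nb = 2*P \<or> na = P \<or> nb = P))"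
      using D_main[OF P_def ra False] n_def by simp
    have bound: "int (sym_vertices (Node a b)) \<le> int n - 1 - dd n"
      using sN IHa(1) IHb(1) DM sumn by linarith
    moreover have "iso_tree (Node a b) (gfb n)" if eq: "int (sym_vertices (Node a b)) = int n - 1 - dd n"
    proof -
      have e1: "dd n = dd na + dd nb + 1" "int (sym_vertices a) = int na - 1 - dd na" "int (sym_vertices b) = int nb - 1 - dd nb"
        using eq sN IHa(1) IHb(1) DM sumn by linarith+
      then have ia: "iso_tree a (gfb na)" "iso_tree b (gfb nb)" using IHa IHb by auto
      have disj: "na = 2*P \<or> nb = 2*P \<or> na = P \<or> nb = P" using DM e1(1) by simp
      have np: "\<forall>j. n \<noteq> 2^j"
      proof
        fix j show "n \<noteq> 2^j"
        proof
          assume nj: "n = 2^j"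
          then have "lg n = j" by (simp add: lg_pow)
          then have "n = 2*P" using nj k_def Pk by simp
          then show False using ra False n_def by simp
        qed
      qed
      obtain e k2 where g: "iso_tree (gfb n) (Node (gfb (n - 2^e)) (FT e))" "2^Suc k2 \<le> n" "n < 2^Suc (Suc k2)"
        "e = k2 \<or> e = Suc k2" "2^k2 \<le> n - 2^e" "n - 2^e \<le> 2^Suc k2" "2^e < n"
        using gfb_dec[OF _ np] n2 by auto
      have "lg n = Suc k2" using g(2,3) by (intro lg_eq) auto
      then have "k2 = k'" using k_def k' by simp
      then have E: "2^e = P \<or> 2^e = 2*P" "P \<le> n - 2^e" "n - 2^e \<le> 2*P" using g(4,5,6) P_def by auto
      have u: "(na = n - 2^e \<and> nb = 2^e) \<or> (na = 2^e \<and> nb = n - 2^e)"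
        using uniq[OF E g(7) n_def[symmetric] ra disj] .
      have fe: "gfb (2^e) = FT e" by (rule gfb_pow)
      show ?thesis
      proof (cases "na = n - 2^e \<and> nb = 2^e")
        case True
        then have "iso_tree (Node a b) (Node (gfb (n - 2^e)) (FT e))" using ia fe by simp
        then show ?thesis using g(1) iso_sym iso_tr by blast
      next
        case F2: False
        then have "na = 2^e" "nb = n - 2^e" using u by auto
        then have "iso_tree (Node a b) (Node (FT e) (gfb (n - 2^e)))" using ia fe by simp
        then have "iso_tree (Node a b) (Node (gfb (n - 2^e)) (FT e))" using iso_swap iso_tr by blast
        then show ?thesis using g(1) iso_sym iso_tr by blast
      qed
    qed
    ultimately show ?thesis using lv n_def by auto
  qed
qed

lemma part_a: "n \<ge> 1 \<Longrightarrow> int (sym_vertices (gfb n)) = int n - 1 - dd n"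
proof (induction n rule: less_induct)
  case (less n)
  show ?case
  proof (cases "\<exists>k. n = 2^k")
    case True
    then obtain k where k: "n = 2^k" by auto
    have "(1::nat) \<le> 2^k" by simp
    then show ?thesis using k gfb_pow[of k] sym_FT[of k] dd_pow[of k] by simp
  next
    case False
    then have np: "\<forall>k. n \<noteq> 2^k" by auto
    obtain e k2 where g: "iso_tree (gfb n) (Node (gfb (n - 2^e)) (FT e))" "2^Suc k2 \<le> n" "n < 2^Suc (Suc k2)"
        "e = k2 \<or> e = Suc k2" "2^k2 \<le> n - 2^e" "n - 2^e \<le> 2^Suc k2" "2^e < n"
      using gfb_dec[OF less.prems np] by auto
    define q where "q = n - 2^e"
    define P where "P = (2::nat)^k2"
    have q1: "q \<ge> 1" "q < n" using g(5,7) q_def by (simp_all add: Suc_le_eq)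
    have lq: "leaves (gfb q) = q" using leaves_gfb q1 by simp
    have qne: "q \<noteq> 2^e"
    proof
      assume "q = 2^e"
      then have "n = 2^Suc e" using q_def g(7) by simp
      then show False using np by blast
    qed
    have nI: "\<not> iso_tree (gfb q) (FT e)" using iso_leaves lq qne by fastforce
    have s1: "sym_vertices (gfb n) = sym_vertices (gfb q) + (2^e - 1)"
      using iso_sym_vertices[OF g(1)] nI sym_FT q_def by simp
    have IH: "int (sym_vertices (gfb q)) = int q - 1 - dd q" using less.IH q1 by simp
    have E: "2^e = P \<or> 2^e = 2*P" using g(4) P_def by auto
    have rq1: "P \<le> q" "q \<le> 2*P" using g(5,6) P_def q_def by simp_all
    have rq2: "P \<le> 2^e" "2^e \<le> 2*P" using E by auto
    note rq = rq1 rq2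
    have "dd (q + 2^e) = dd q + dd (2^e) + 1"
      using D_main[OF P_def rq qne] E by auto
    then have ddn: "dd n = dd q + 1" using q_def g(7) dd_pow by simp
    have "(1::nat) \<le> 2^e" by simp
    then have "int (2^e - 1) = 2^e - 1" by simp
    have s1': "sym_vertices (gfb n) + 1 = sym_vertices (gfb q) + 2^e" using s1 \<open>(1::nat) \<le> 2^e\<close> by simp
    have h1: "int (sym_vertices (gfb n)) + 1 = int (sym_vertices (gfb q)) + 2^e"
    proof -
      have "int (sym_vertices (gfb n) + 1) = int (sym_vertices (gfb q) + 2^e)" using s1' by (rule arg_cong)
      then show ?thesis by simp
    qed
    have h2: "int n = int q + 2^e" using q_def g(7) by simp
    show ?thesis using h1 h2 IH ddn by linarith
  qed
qed

lemma sum_bound: "sorted_wrt (>) ms \<Longrightarrow> (\<forall>x\<in>set ms. x < m) \<Longrightarrow> (\<Sum>x\<leftarrow>ms. (2::nat)^x) < 2^m"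
proof (induction ms arbitrary: m)
  case Nil then show ?case by simp
next
  case (Cons x xs)
  have "(\<Sum>y\<leftarrow>xs. (2::nat)^y) < 2^x" using Cons by auto
  moreover have "(2::nat)^Suc x \<le> 2^m" using Cons.prems(2) by (intro power_increasing) auto
  ultimately show ?case by simp
qed

lemma sum_dvd: "(\<forall>x\<in>set ys. s \<le> x) \<Longrightarrow> (2::nat)^s dvd (\<Sum>x\<leftarrow>ys. 2^x)"
proof (induction ys)
  case (Cons y ys)
  have "(2::nat)^s dvd 2^y" using Cons.prems by (intro le_imp_power_dvd) auto
  then show ?case using Cons by auto
qed simp

lemma ms_link:
  assumes "ms \<noteq> []" "sorted_wrt (>) ms" "n = (\<Sum>m\<leftarrow>ms. (2::nat)^m)"
  shows "lg n = hd ms \<and> tz n = last ms"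
proof
  obtain m1 rest where ms: "ms = m1 # rest" using assms(1) by (cases ms) auto
  have "(\<Sum>m\<leftarrow>rest. (2::nat)^m) < 2^m1" using assms(2) ms by (intro sum_bound) auto
  then show "lg n = hd ms" using assms(3) ms by (intro lg_eq) auto
next
  obtain ys l where ms: "ms = ys @ [l]" using assms(1) by (metis append_butlast_last_id)
  have gt: "\<forall>x\<in>set ys. Suc l \<le> x" using assms(2) ms by (auto simp: sorted_wrt_append)
  have d1: "(2::nat)^Suc l dvd (\<Sum>x\<leftarrow>ys. 2^x)" using sum_dvd[OF gt] .
  have n: "n = (\<Sum>x\<leftarrow>ys. 2^x) + 2^l" using assms(3) ms by simp
  have "tz n = l"
  proof (rule tz_eq)
    have "(2::nat)^l dvd 2^Suc l" by (simp add: le_imp_power_dvd)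
    then have "(2::nat)^l dvd (\<Sum>x\<leftarrow>ys. 2^x)" using d1 dvd_trans by blast
    then show "2^l dvd n" using n by simp
    show "\<not> 2^Suc l dvd n"
    proof
      assume "2^Suc l dvd n"
      then have "(2::nat)^Suc l dvd 2^l" using n d1 by (simp add: dvd_add_right_iff)
      then have "(2::nat)^Suc l \<le> 2^l" by (rule dvd_imp_le) simp
      then show False by simp
    qed
  qed
  then show "tz n = last ms" using ms by simp
qed

theorem proposition8:
  fixes n :: nat and ms :: "nat list"
  assumes "n \<ge> 1"
    and "ms \<noteq> []"
    and "sorted_wrt (>) ms"
    and "n = (\<Sum>m\<leftarrow>ms. 2 ^ m)"
  shows "int (sym_vertices (gfb n)) = int n - 1 - (int (hd ms) - int (last ms)) \<and>
         (\<forall>T. leaves T = n \<longrightarrow> colless T = min_colless n \<longrightarrow> \<not> iso_tree T (gfb n)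
           \<longrightarrow> sym_vertices T < sym_vertices (gfb n))"
proof -
  have ddn: "dd n = int (hd ms) - int (last ms)" using ms_link[OF assms(2,3,4)] unfolding dd_def by simp
  have pa: "int (sym_vertices (gfb n)) = int n - 1 - dd n" using part_a[OF assms(1)] .
  show ?thesis
  proof (intro conjI allI impI)
    show "int (sym_vertices (gfb n)) = int n - 1 - (int (hd ms) - int (last ms))" using pa ddn by simp
    fix T assume T: "leaves T = n" "colless T = min_colless n" "\<not> iso_tree T (gfb n)"
    have "colless T = cc (leaves T)" using T min_colless_eq assms(1) by simp
    then have "int (sym_vertices T) \<le> int n - 1 - dd n"
      "int (sym_vertices T) = int n - 1 - dd n \<longrightarrow> iso_tree T (gfb n)" using main_bound T(1) by auto
    then have "int (sym_vertices T) < int (sym_vertices (gfb n))" using pa T(3) by linarith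
    then show "sym_vertices T < sym_vertices (gfb n)" by simp
  qed
qed


end
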